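(* Let $\mathcal G$ be a core network with input nodes $\iota_1,\dots,\iota_n$ and output node $o$, fix $m$, and let $\mathcal D_m$ be the vestigial subnetwork with respect to $\iota_m$ (assumed nonempty). Let $D_{m,j}$ be one of the diagonal blocks of the Frobenius–König normal form of $J_{\mathcal D_m}$ and let $\mathcal D_{m,j}$ be the subnetwork of $\mathcal D_m$ associated to $D_{m,j}$. Then: (a) nodes in $\mathcal D_{m,j}$ are not $\mathcal D_m$-path equivalent to any node in $\mathcal D_m\setminus\mathcal D_{m,j}$; (b) $\mathcal D_{m,j}$ is a path component of $\mathcal D_m$.
   Context: Setting: $\mathcal G$ is a finite directed graph with input nodes $\iota_1,\dots,\iota_n$ and output node $o$; node $b$ is downstream from $a$ (and $a$ upstream from $b$) if there is a directed path from $a$ to $b$ (every node is up/downstream from itself). $\mathcal G$ is a core network if every node is upstream from $o$ and downstream from at least one input node. $\mathcal G_m$ is the subnetwork of nodes downstream from $\iota_m$ and upstream from $o$; the vestigial subnetwork $\mathcal D_m$ consists of the nodes of $\mathcal G$ not in $\mathcal G_m$ (i.e. not downstream from $\iota_m$) with all arrows of $\mathcal G$ between them. Each node $j$ carries a function $f_j$ and the partial derivatives $f_{j,x_\ell}$, one for each arrow $\ell\to j$ and one self-coupling $f_{j,x_j}$ for every node, are regarded as independent indeterminates; for a set of nodes $\mathcal K$, $J_{\mathcal K}=(f_{j,x_\ell})_{j,\ell\in\mathcal K}$ (entries $0$ where there is no arrow). By Frobenius–König theory there are permutation matrices $P_m,Q_m$ with $P_mJ_{\mathcal D_m}Q_m$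 block upper triangular with square fully indecomposable diagonal blocks $D_{m,1},\dots,D_{m,n_m}$, each with irreducible determinant. Each block $D_{m,j}$ of order $k_j$ contains exactly $k_j$ self-couplings, and after permuting rows and columns it equals $J_{\mathcal D_{m,j}}$ for the set $\mathcal D_{m,j}$ of nodes indexing its rows; $\mathcal D_{m,j}$ (with all arrows between its nodes) is the subnetwork associated to $D_{m,j}$. For a subnetwork $\mathcal K$, nodes $a,b$ are $\mathcal K$-path equivalent if there are directed paths within $\mathcal K$ from $a$ to $b$ and from $b$ to $a$; a $\mathcal K$-path component is an equivalence class. *)

theory Defs
  imports Main
begin

text \<open>A network: finite node set V, arrows E as pairs (source, target).
  Node b is downstream from a iff (a,b) is in the reflexive transitive closure of E.\<close>

definition core_network ::
  "'a set \<Rightarrow> ('a \<times> 'a) set \<Rightarrow> (nat \<Rightarrow> 'a) \<Rightarrow> nat \<Rightarrow> 'a \<Rightarrow> bool" where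
  "core_network V E inp n out \<longleftrightarrow>
     finite V \<and> E \<subseteq> V \<times> V \<and> out \<in> V \<and> (\<forall>i\<in>{1..n}. inp i \<in> V) \<and>
     (\<forall>v\<in>V. (v, out) \<in> E\<^sup>* \<and> (\<exists>i\<in>{1..n}. (inp i, v) \<in> E\<^sup>*))"

definition sub_G :: "'a set \<Rightarrow> ('a \<times> 'a) set \<Rightarrow> (nat \<Rightarrow> 'a) \<Rightarrow> 'a \<Rightarrow> nat \<Rightarrow> 'a set" where
  "sub_G V E inp out m = {v \<in> V. (inp m, v) \<in> E\<^sup>* \<and> (v, out) \<in> E\<^sup>*}"

text \<open>Vestigial subnetwork D_m (its arrows are all arrows of E between its nodes).\<close>
definition vestigial :: "'a set \<Rightarrow> ('a \<times> 'a) set \<Rightarrow> (nat \<Rightarrow> 'a) \<Rightarrow> 'a \<Rightarrow> nat \<Rightarrow> 'a set" where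
  "vestigial V E inp out m = V - sub_G V E inp out m"

definition restr :: "('a \<times> 'a) set \<Rightarrow> 'a set \<Rightarrow> ('a \<times> 'a) set" where
  "restr E K = E \<inter> (K \<times> K)"

definition path_equiv :: "('a \<times> 'a) set \<Rightarrow> 'a set \<Rightarrow> 'a \<Rightarrow> 'a \<Rightarrow> bool" where
  "path_equiv E K a b \<longleftrightarrow> a \<in> K \<and> b \<in> K \<and> (a, b) \<in> (restr E K)\<^sup>* \<and> (b, a) \<in> (restr E K)\<^sup>*"

definition path_component :: "('a \<times> 'a) set \<Rightarrow> 'a set \<Rightarrow> 'a set \<Rightarrow> bool" where
  "path_component E K C \<longleftrightarrow> (\<exists>a\<in>K. C = {b. path_equiv E K a b})"

text \<open>Nonzero pattern of the Jacobian J_K: the entry in row a, column b is the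
  indeterminate f_{a,x_b}, present iff a = b (self-coupling) or there is an arrow b -> a.
  Since the entries are independent indeterminates, zero/nonzero is exactly this pattern.\<close>
definition jac_nz :: "('a \<times> 'a) set \<Rightarrow> 'a set \<Rightarrow> 'a \<Rightarrow> 'a \<Rightarrow> bool" where
  "jac_nz E K a b \<longleftrightarrow> a \<in> K \<and> b \<in> K \<and> (a = b \<or> (b, a) \<in> E)"

definition fully_indecomposable :: "nat \<Rightarrow> (nat \<Rightarrow> nat \<Rightarrow> bool) \<Rightarrow> bool" where
  "fully_indecomposable k Z \<longleftrightarrow> k \<ge> 1 \<and> (k = 1 \<longrightarrow> Z 0 0) \<and>
     (\<forall>S T. S \<subseteq> {..<k} \<and> T \<subseteq> {..<k} \<and> S \<noteq> {} \<and> T \<noteq> {} \<and> card S + card T = k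
        \<longrightarrow> (\<exists>r\<in>S. \<exists>c\<in>T. Z r c))"

text \<open>Frobenius-Koenig normal form of J_K: the permutation matrices P, Q are encoded by
  bijections sig, tau : {0..<card K} -> K (row r of P J Q is row sig r of J, column c is
  column tau c of J); the diagonal blocks are rows/columns bd i ..< bd (Suc i), i < p.
  Block upper triangular: a nonzero entry in block row i, block column i' has i \<le> i'.\<close>
definition FK_normal_form ::
  "('a \<times> 'a) set \<Rightarrow> 'a set \<Rightarrow> (nat \<Rightarrow> 'a) \<Rightarrow> (nat \<Rightarrow> 'a) \<Rightarrow> nat \<Rightarrow> (nat \<Rightarrow> nat) \<Rightarrow> bool" where
  "FK_normal_form E K sig tau p bd \<longleftrightarrow>
     bij_betw sig {..<card K} K \<and> bij_betw tau {..<card K} K \<and>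
     bd 0 = 0 \<and> bd p = card K \<and> (\<forall>i<p. bd i < bd (Suc i)) \<and>
     (\<forall>i<p. \<forall>i'<p. \<forall>r\<in>{bd i..<bd (Suc i)}. \<forall>c\<in>{bd i'..<bd (Suc i')}.
         jac_nz E K (sig r) (tau c) \<longrightarrow> i \<le> i') \<and>
     (\<forall>i<p. fully_indecomposable (bd (Suc i) - bd i)
              (\<lambda>r c. jac_nz E K (sig (bd i + r)) (tau (bd i + c))))"

definition FK_block_nodes :: "(nat \<Rightarrow> 'a) \<Rightarrow> (nat \<Rightarrow> nat) \<Rightarrow> nat \<Rightarrow> 'a set" where
  "FK_block_nodes sig bd j = sig ` {bd j..<bd (Suc j)}"

end

theory Submission
  imports Defs
begin

lemma bd_mono: assumes "\<forall>i<p. bd i < bd (Suc i)" "i \<le> i'" "i' \<le> p"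
  shows "bd i \<le> (bd i' :: nat)"
  using assms(2,3)
proof (induction i')
  case 0 thus ?case by simp
next
  case (Suc k)
  show ?case
  proof (cases "i = Suc k")
    case True thus ?thesis by simp
  next
    case False
    hence "i \<le> k" using Suc.prems by simp
    hence "bd i \<le> bd k" using Suc by simp
    also have "bd k < bd (Suc k)" using assms(1) Suc.prems by simp
    finally show ?thesis by simp
  qed
qed

lemma blk_ex: assumes "\<forall>i<p. bd i < bd (Suc i)" "bd 0 = (0::nat)" "r < bd p"
  shows "\<exists>i<p. bd i \<le> r \<and> r < bd (Suc i)"
  using assms
proof (induction p)
  case 0 thus ?case by simp
next
  case (Suc p)
  show ?case
  proof (cases "r < bd p")
    case True
    then obtain i where "i<p" "bd i \<le> r \<and> r < bd (Suc i)" using Suc by auto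
    thus ?thesis by (intro exI[of _ i]) auto
  next
    case False thus ?thesis using Suc.prems by (intro exI[of _ p]) auto
  qed
qed

lemma blk_uniq: assumes "\<forall>i<p. bd i < bd (Suc i)" "i<p" "i'<p" "bd i \<le> (r::nat)" "r < bd (Suc i)"
   "bd i' \<le> r" "r < bd (Suc i')" shows "i = (i'::nat)"
proof (rule ccontr)
  assume "i \<noteq> i'"
  then consider "Suc i \<le> i'" | "Suc i' \<le> i" by linarith
  thus False
  proof cases
    case 1 then have "bd (Suc i) \<le> bd i'" by (intro bd_mono[OF assms(1)]) (use assms in auto)
    thus False using assms by simp
  next
    case 2 then have "bd (Suc i') \<le> bd i" by (intro bd_mono[OF assms(1)]) (use assms in auto)
    thus False using assms by simp
  qed
qed

theorem theorem3p7:
  fixes V :: "'a set" and E :: "('a \<times> 'a) set" and inp :: "nat \<Rightarrow> 'a"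
    and n m :: nat and out :: 'a
    and sig tau :: "nat \<Rightarrow> 'a" and p :: nat and bd :: "nat \<Rightarrow> nat" and j :: nat
  defines "D \<equiv> vestigial V E inp out m"
  defines "B \<equiv> FK_block_nodes sig bd j"
  assumes "core_network V E inp n out"
    and "m \<in> {1..n}"
    and "D \<noteq> {}"
    and "FK_normal_form E D sig tau p bd"
    and "j < p"
  shows "(\<forall>a\<in>B. \<forall>b\<in>D - B. \<not> path_equiv E D a b) \<and> path_component E D B"
proof -
  define N where "N = card D"
  have FK: "FK_normal_form E D sig tau p bd" by fact
  have jp: "j < p" by fact
  have Bdef: "B = sig ` {bd j..<bd (Suc j)}" unfolding B_def FK_block_nodes_def by simp
  note F = FK[unfolded FK_normal_form_def N_def[symmetric]]
  have sigb: "bij_betw sig {..<N} D" using F by (rule conjunct1)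
  note F = F[THEN conjunct2]
  have taub: "bij_betw tau {..<N} D" using F by (rule conjunct1)
  note F = F[THEN conjunct2]
  have bd0: "bd 0 = 0" using F by (rule conjunct1)
  note F = F[THEN conjunct2]
  have bdp: "bd p = N" using F by (rule conjunct1)
  note F = F[THEN conjunct2]
  have bdinc: "\<forall>i<p. bd i < bd (Suc i)" using F by (rule conjunct1)
  note F = F[THEN conjunct2]
  have tri: "\<forall>i<p. \<forall>i'<p. \<forall>r\<in>{bd i..<bd (Suc i)}. \<forall>c\<in>{bd i'..<bd (Suc i')}.
         jac_nz E D (sig r) (tau c) \<longrightarrow> i \<le> i'" using F by (rule conjunct1)
  have fi: "\<forall>i<p. fully_indecomposable (bd (Suc i) - bd i)
              (\<lambda>r c. jac_nz E D (sig (bd i + r)) (tau (bd i + c)))"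
    using F by (rule conjunct2)
  have finD: "finite D" using sigb bij_betw_finite by blast
  have injs: "inj_on sig {..<N}" and imgs: "sig ` {..<N} = D"
    using sigb by (auto simp: bij_betw_def)
  have injt: "inj_on tau {..<N}" and imgt: "tau ` {..<N} = D"
    using taub by (auto simp: bij_betw_def)
  have bdle: "bd i \<le> N" if "i \<le> p" for i using bd_mono[OF bdinc that] bdp by simp

  define blk where "blk r = (THE i. i<p \<and> bd i \<le> r \<and> r < bd (Suc i))" for r
  have blk_eq: "blk r = i" if "i<p" "bd i \<le> r" "r < bd (Suc i)" for i r
    unfolding blk_def
    by (rule the_equality) (use that blk_uniq[OF bdinc] in blast)+
  have blk: "blk r < p \<and> bd (blk r) \<le> r \<and> r < bd (Suc (blk r))" if rN: "r < N" for r
  proof -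
    obtain i where i: "i<p" "bd i \<le> r" "r < bd (Suc i)" using blk_ex[OF bdinc bd0] rN bdp by auto
    thus ?thesis using blk_eq[OF i] by simp
  qed
  have blk_le: "blk r \<le> i \<longleftrightarrow> r < bd (Suc i)" if "r < N" "i < p" for r i
  proof
    assume "blk r \<le> i"
    hence "bd (Suc (blk r)) \<le> bd (Suc i)" using bd_mono[OF bdinc] that by simp
    thus "r < bd (Suc i)" using blk[OF that(1)] by simp
  next
    assume a: "r < bd (Suc i)"
    show "blk r \<le> i"
    proof (rule ccontr)
      assume "\<not> blk r \<le> i"
      hence "bd (Suc i) \<le> bd (blk r)" using bd_mono[OF bdinc, of "Suc i" "blk r"] blk[OF that(1)] by simp
      thus False using a blk[OF that(1)] by simp
    qed
  qed

  define si where "si = inv_into {..<N} sig"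
  define ti where "ti = inv_into {..<N} tau"
  have si: "si x < N \<and> sig (si x) = x" if "x \<in> D" for x
  proof -
    have "x \<in> sig ` {..<N}" using imgs that by simp
    thus ?thesis unfolding si_def using inv_into_into[of x sig "{..<N}"] f_inv_into_f[of x sig "{..<N}"] by simp
  qed
  have ti: "ti x < N \<and> tau (ti x) = x" if "x \<in> D" for x
  proof -
    have "x \<in> tau ` {..<N}" using imgt that by simp
    thus ?thesis unfolding ti_def using inv_into_into[of x tau "{..<N}"] f_inv_into_f[of x tau "{..<N}"] by simp
  qed
  have si2: "si (sig r) = r" if "r < N" for r
    using injs that unfolding si_def by (simp add: inv_into_f_f)
  have ti2: "ti (tau r) = r" if "r < N" for r
    using injt that unfolding ti_def by (simp add: inv_into_f_f)
  define rho where "rho x = blk (si x)" for x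
  define kap where "kap x = blk (ti x)" for x
  have tri': "blk r \<le> blk c" if "r<N" "c<N" "jac_nz E D (sig r) (tau c)" for r c
    using tri[rule_format, of "blk r" "blk c" r c] blk[OF that(1)] blk[OF that(2)] that(3) by auto
  have rk: "rho x \<le> kap x" if "x \<in> D" for x
  proof -
    have "jac_nz E D (sig (si x)) (tau (ti x))" using si[OF that] ti[OF that] that
      unfolding jac_nz_def by simp
    thus ?thesis unfolding rho_def kap_def using tri' si[OF that] ti[OF that] by blast
  qed
  have rp: "rho x < p" if "x \<in> D" for x unfolding rho_def using blk si that by blast
  have cr: "{x\<in>D. rho x \<le> i} = sig ` {..<bd (Suc i)}" if "i < p" for i
  proof (intro equalityI subsetI)
    fix x assume "x \<in> {x\<in>D. rho x \<le> i}"
    hence x: "x \<in> D" "rho x \<le> i" by auto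
    hence "si x < bd (Suc i)" using blk_le si that unfolding rho_def by blast
    thus "x \<in> sig ` {..<bd (Suc i)}" using si[OF x(1)] by (intro image_eqI[of _ _ "si x"]) auto
  next
    fix x assume "x \<in> sig ` {..<bd (Suc i)}"
    then obtain r where r: "r < bd (Suc i)" "x = sig r" by auto
    have rN: "r < N" using r bdle[of "Suc i"] that by simp
    have "x \<in> D" using imgs rN r by auto
    moreover have "rho x \<le> i" unfolding rho_def r(2) si2[OF rN] using blk_le[OF rN that] r by simp
    ultimately show "x \<in> {x\<in>D. rho x \<le> i}" by simp
  qed
  have ck: "{x\<in>D. kap x \<le> i} = tau ` {..<bd (Suc i)}" if "i < p" for i
  proof (intro equalityI subsetI)
    fix x assume "x \<in> {x\<in>D. kap x \<le> i}"
    hence x: "x \<in> D" "kap x \<le> i" by auto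
    hence "ti x < bd (Suc i)" using blk_le ti that unfolding kap_def by blast
    thus "x \<in> tau ` {..<bd (Suc i)}" using ti[OF x(1)] by (intro image_eqI[of _ _ "ti x"]) auto
  next
    fix x assume "x \<in> tau ` {..<bd (Suc i)}"
    then obtain r where r: "r < bd (Suc i)" "x = tau r" by auto
    have rN: "r < N" using r bdle[of "Suc i"] that by simp
    have "x \<in> D" using imgt rN r by auto
    moreover have "kap x \<le> i" unfolding kap_def r(2) ti2[OF rN] using blk_le[OF rN that] r by simp
    ultimately show "x \<in> {x\<in>D. kap x \<le> i}" by simp
  qed
  have eq: "rho x = kap x" if "x \<in> D" for x
  proof -
    define i where "i = rho x"
    have ip: "i < p" using rp that i_def by simp
    have sub: "{x\<in>D. kap x \<le> i} \<subseteq> {x\<in>D. rho x \<le> i}" using rk by fastforce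
    have c1: "card (sig ` {..<bd (Suc i)}) = bd (Suc i)"
      using inj_on_subset[OF injs, of "{..<bd (Suc i)}"] bdle[of "Suc i"] ip
      by (simp add: card_image subset_eq)
    have c2: "card (tau ` {..<bd (Suc i)}) = bd (Suc i)"
      using inj_on_subset[OF injt, of "{..<bd (Suc i)}"] bdle[of "Suc i"] ip
      by (simp add: card_image subset_eq)
    have "{x\<in>D. kap x \<le> i} = {x\<in>D. rho x \<le> i}"
      by (rule card_subset_eq) (use finD sub c1 c2 cr[OF ip] ck[OF ip] in auto)
    hence "kap x \<le> i" using that i_def by blast
    thus ?thesis using rk[OF that] i_def by simp
  qed
  have Bc: "B = {x\<in>D. rho x = j}"
  proof (intro equalityI subsetI)
    fix x assume "x \<in> B"
    then obtain r where r: "bd j \<le> r" "r < bd (Suc j)" "x = sig r" using Bdef by auto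
    have rN: "r < N" using r bdle[of "Suc j"] jp by simp
    show "x \<in> {x\<in>D. rho x = j}" using imgs rN r blk_eq[OF jp r(1,2)] si2[OF rN]
      unfolding rho_def by auto
  next
    fix x assume "x \<in> {x\<in>D. rho x = j}"
    hence x: "x \<in> D" "blk (si x) = j" unfolding rho_def by auto
    thus "x \<in> B" unfolding Bdef using si[OF x(1)] blk[of "si x"]
      by (intro image_eqI[of _ _ "si x"]) auto
  qed
  have Bt: "tau ` {bd j..<bd (Suc j)} = B"
  proof (intro equalityI subsetI)
    fix x assume "x \<in> tau ` {bd j..<bd (Suc j)}"
    then obtain r where r: "bd j \<le> r" "r < bd (Suc j)" "x = tau r" by auto
    have rN: "r < N" using r bdle[of "Suc j"] jp by simp
    have "x \<in> D" "kap x = j" using imgt rN r blk_eq[OF jp r(1,2)] ti2[OF rN]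
      unfolding kap_def by auto
    thus "x \<in> B" using Bc eq by auto
  next
    fix x assume "x \<in> B"
    hence x: "x \<in> D" "blk (ti x) = j" using Bc eq unfolding kap_def by auto
    thus "x \<in> tau ` {bd j..<bd (Suc j)}" using ti[OF x(1)] blk[of "ti x"]
      by (intro image_eqI[of _ _ "ti x"]) auto
  qed
  have BD: "B \<subseteq> D" using Bc by auto
  have edge: "rho a \<le> rho b" if "(b,a) \<in> E" "a \<in> D" "b \<in> D" for a b
  proof -
    have "jac_nz E D (sig (si a)) (tau (ti b))" using si[OF that(2)] ti[OF that(3)] that
      unfolding jac_nz_def by simp
    hence "rho a \<le> kap b" unfolding rho_def kap_def using tri' si[OF that(2)] ti[OF that(3)] by blast
    thus ?thesis using eq[OF that(3)] by simp
  qed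
  have path: "y \<in> D \<and> rho y \<le> rho x" if "(x,y) \<in> (restr E D)\<^sup>*" "x \<in> D" for x y
    using that(1)
  proof (induction rule: rtrancl_induct)
    case base thus ?case using that(2) by simp
  next
    case (step y z)
    hence "(y,z) \<in> E" "z \<in> D" "y \<in> D" unfolding restr_def by auto
    thus ?case using edge step by fastforce
  qed
  have partA: "\<forall>a\<in>B. \<forall>b\<in>D - B. \<not> path_equiv E D a b"
  proof (intro ballI notI)
    fix a b assume a: "a \<in> B" and b: "b \<in> D - B" and pe: "path_equiv E D a b"
    have "rho b \<le> rho a" "rho a \<le> rho b" using pe path unfolding path_equiv_def by blast+
    thus False using a b Bc by auto
  qed
  define k where "k = bd (Suc j) - bd j"
  have fij: "fully_indecomposable k (\<lambda>r c. jac_nz E D (sig (bd j + r)) (tau (bd j + c)))"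
    using fi jp unfolding k_def by blast
  have hk: "(\<lambda>r. bd j + r) ` {..<k} = {bd j..<bd (Suc j)}"
  proof (intro equalityI subsetI)
    fix x assume "x \<in> {bd j..<bd (Suc j)}"
    thus "x \<in> (\<lambda>r. bd j + r) ` {..<k}" unfolding k_def
      by (intro image_eqI[of _ _ "x - bd j"]) auto
  qed (auto simp: k_def)
  have subN: "{bd j..<bd (Suc j)} \<subseteq> {..<N}" using bdle[of "Suc j"] jp by auto
  have injh: "inj_on (\<lambda>r. sig (bd j + r)) {..<k}"
    unfolding inj_on_def
  proof (intro ballI impI)
    fix r r' assume r: "r \<in> {..<k}" "r' \<in> {..<k}" "sig (bd j + r) = sig (bd j + r')"
    have "bd j + r < N" "bd j + r' < N" using r(1,2) bdle[of "Suc j"] jp unfolding k_def by auto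
    hence "bd j + r = bd j + r'" using inj_onD[OF injs r(3)] by simp
    thus "r = r'" by simp
  qed
  have injg: "inj_on (\<lambda>r. tau (bd j + r)) {..<k}"
    unfolding inj_on_def
  proof (intro ballI impI)
    fix r r' assume r: "r \<in> {..<k}" "r' \<in> {..<k}" "tau (bd j + r) = tau (bd j + r')"
    have "bd j + r < N" "bd j + r' < N" using r(1,2) bdle[of "Suc j"] jp unfolding k_def by auto
    hence "bd j + r = bd j + r'" using inj_onD[OF injt r(3)] by simp
    thus "r = r'" by simp
  qed
  have imh: "(\<lambda>r. sig (bd j + r)) ` {..<k} = B" unfolding Bdef hk[symmetric] by auto
  have img: "(\<lambda>r. tau (bd j + r)) ` {..<k} = B" unfolding Bt[symmetric] hk[symmetric] by auto
  have cB: "card B = k" using card_image[OF injh] imh by simp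
  have strong: "(a,b) \<in> (restr E D)\<^sup>*" if a: "a \<in> B" and b: "b \<in> B" for a b
  proof -
    define X where "X = {y\<in>B. (a,y) \<in> (restr E D)\<^sup>*}"
    have "X = B"
    proof (rule ccontr)
      assume XB: "X \<noteq> B"
      define S where "S = {r\<in>{..<k}. sig (bd j + r) \<in> B - X}"
      define T where "T = {r\<in>{..<k}. tau (bd j + r) \<in> X}"
      have XsB: "X \<subseteq> B" unfolding X_def by auto
      have finB: "finite B" using finD BD finite_subset by blast
      have imS: "(\<lambda>r. sig (bd j + r)) ` S = B - X" unfolding S_def using imh by auto
      have imT: "(\<lambda>r. tau (bd j + r)) ` T = X" unfolding T_def using img XsB by auto
      have SK: "S \<subseteq> {..<k}" "T \<subseteq> {..<k}" unfolding S_def T_def by auto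
      have cS: "card S = card (B - X)"
        using card_image[OF inj_on_subset[OF injh SK(1)]] imS by simp
      have cT: "card T = card X"
        using card_image[OF inj_on_subset[OF injg SK(2)]] imT by simp
      have "card (B - X) + card X = k"
        using card_Diff_subset[OF finite_subset[OF XsB finB] XsB] card_mono[OF finB XsB] cB by simp
      hence csum: "card S + card T = k" using cS cT by simp
      have Sne: "S \<noteq> {}" using imS XsB XB by auto
      have Tne: "T \<noteq> {}" using imT a unfolding X_def by auto
      have FI: "\<forall>S T. S \<subseteq> {..<k} \<and> T \<subseteq> {..<k} \<and> S \<noteq> {} \<and> T \<noteq> {} \<and> card S + card T = k
        \<longrightarrow> (\<exists>r\<in>S. \<exists>c\<in>T. jac_nz E D (sig (bd j + r)) (tau (bd j + c)))"
        using fij unfolding fully_indecomposable_def by (rule conjunct2[THEN conjunct2])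
      have "\<exists>r\<in>S. \<exists>c\<in>T. jac_nz E D (sig (bd j + r)) (tau (bd j + c))"
        using FI[rule_format, of S T] SK Sne Tne csum by simp
      then obtain r c where rc: "r \<in> S" "c \<in> T" "jac_nz E D (sig (bd j + r)) (tau (bd j + c))"
        by blast
      define y where "y = sig (bd j + r)"
      define x where "x = tau (bd j + c)"
      have y: "y \<in> B - X" using rc(1) unfolding S_def y_def by auto
      have x: "x \<in> X" using rc(2) unfolding T_def x_def by auto
      have "y \<noteq> x" using x y by auto
      hence "(x, y) \<in> E" using rc(3) unfolding jac_nz_def x_def y_def by auto
      hence "(x, y) \<in> restr E D" using x y XsB BD unfolding restr_def by auto
      hence "(a, y) \<in> (restr E D)\<^sup>*" using x unfolding X_def by auto
      thus False using y unfolding X_def by auto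
    qed
    thus ?thesis using b unfolding X_def by auto
  qed
  have Bne: "B \<noteq> {}" using Bdef bdinc jp by auto
  then obtain a where a: "a \<in> B" by auto
  have "B = {b. path_equiv E D a b}"
  proof (intro equalityI subsetI)
    fix b assume "b \<in> B" thus "b \<in> {b. path_equiv E D a b}"
      using strong a BD unfolding path_equiv_def by auto
  next
    fix b assume "b \<in> {b. path_equiv E D a b}"
    hence pe: "path_equiv E D a b" by simp
    hence "b \<in> D" unfolding path_equiv_def by simp
    thus "b \<in> B" using partA a pe by blast
  qed
  hence "path_component E D B" unfolding path_component_def
    by (rule bexI[of _ a]) (use a BD in auto)
  thus ?thesis using partA by simp
qed

end
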